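(* Let $N\ge1$, $r_i>0$ for $i=1,\dots,N$, and $S_u=\bigsqcup_{i=1}^N\{i\}\times[0,r_i]$; write $f\in C(S_u)$ as $f=\sum_i f_i$ with $f_i\in C[0,r_i]$. Let $p_i,q_i\in[0,1]$, $c_i,d_i>0$, and let $\mathfrak p_{i,1},\mathfrak p_{i,2}$, $i=1,\dots,N$, be Borel sub-probability measures on $S_u$. Let $A$ be the operator $Af=\tfrac12 f''$ (i.e. $(Af)_i=\tfrac12 f_i''$) with domain consisting of those $f$ with each $f_i\in C^2[0,r_i]$ and $$p_if_i''(0)-(1-p_i)f_i'(0)+c_if_i(0)=c_i\int f\,\mathrm d\mathfrak p_{i,1},\qquad q_if_i''(r_i)+(1-q_i)f_i'(r_i)+d_if_i(r_i)=d_i\int f\,\mathrm d\mathfrak p_{i,2}$$ for all $i$. For each $i$ let $A_i$ be the operator $A_if=\tfrac12 f''$ on $C[0,r_i]$ with domain the $f\in C^2[0,r_i]$ with $p_if''(0)-(1-p_i)f'(0)+c_if(0)=0$ and $q_if''(r_i)+(1-q_i)f'(r_i)+d_if(r_i)=0$; it generates a Feller semigroup with resolvent $R_{\lambda,i}$. For $\lambda>0$, with $s=\sqrt{2\lambda}$, let $$a^i_{1,1}=2\lambda p_i-s(1-p_i)+c_i,\quad a^i_{1,2}=2\lambda p_i+s(1-p_i)+c_i,$$ $$a^i_{2,1}=e^{sr_i}(2\lambda q_i+s(1-q_i)+d_i),\quad a^i_{2,2}=e^{-sr_i}(2\lambda q_i-s(1-q_i)+d_i),$$ $W_i=a^i_{1,1}a^i_{2,2}-a^i_{1,2}a^i_{2,1}$,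 and for $x\in[0,r_i]$ $$\ell^{i,1}_\lambda(x)=\tfrac{c_i}{W_i}\big(a^i_{2,2}e^{sx}-a^i_{2,1}e^{-sx}\big),\qquad \ell^{i,2}_\lambda(x)=\tfrac{d_i}{W_i}\big(a^i_{1,1}e^{-sx}-a^i_{1,2}e^{sx}\big)$$ (extended by $0$ outside the $i$th interval). For $g\in C(S_u)$ set $R^{du}_\lambda g=\sum_iR_{\lambda,i}g_i$, let $(u_{i,j})_{i\le N,j\in\{1,2\}}$ be the unique solution of $$u_{i,j}=\int R^{du}_\lambda g\,\mathrm d\mathfrak p_{i,j}+\sum_{k=1}^N\sum_{l=1}^2u_{k,l}\int\ell^{k,l}_\lambda\,\mathrm d\mathfrak p_{i,j},$$ and $R^{co}_\lambda g=R^{du}_\lambda g+\sum_{i=1}^N\sum_{j=1}^2u_{i,j}\ell^{i,j}_\lambda$. Then for every $\lambda>0$ and $g\in C(S_u)$ there is a unique $f$ in the domain of $A$ with $\lambda f-Af=g$, and this $f$ equals $R^{co}_\lambda g$.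
   Context: $C[0,r]$ denotes real continuous functions on $[0,r]$, $C^2[0,r]$ twice continuously differentiable functions (one-sided derivatives at endpoints). A Feller semigroup is a strongly continuous semigroup of positive contractions with $T(0)=I$, not necessarily conservative. The functions $\ell^{i,1}_\lambda,\ell^{i,2}_\lambda$ are the Laplace transforms of the two exit laws of $A_i$ (exits through $0$ and through $r_i$), and the linear system defining $(u_{i,j})$ is uniquely solvable. *)

theory Defs
  imports "HOL-Analysis.Analysis" "HOL-Probability.Probability"
begin

definition Su :: "nat \<Rightarrow> (nat \<Rightarrow> real) \<Rightarrow> (nat \<times> real) set" where
  "Su N r = {(i, x). i \<in> {1..N} \<and> x \<in> {0..r i}}"

definition C2_on :: "real \<Rightarrow> real \<Rightarrow> (real \<Rightarrow> real) \<Rightarrow> (real \<Rightarrow> real) \<Rightarrow> (real \<Rightarrow> real) \<Rightarrow> bool" where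
  "C2_on a b f f1 f2 \<longleftrightarrow>
     (\<forall>x\<in>{a..b}. (f has_real_derivative f1 x) (at x within {a..b}) \<and>
                  (f1 has_real_derivative f2 x) (at x within {a..b})) \<and>
     continuous_on {a..b} f2"

text \<open>Graph of the operator A_i on C[0,r]: f in the domain of A_i and A_i f = h on [0,r].\<close>
definition Ai_rel :: "real \<Rightarrow> real \<Rightarrow> real \<Rightarrow> real \<Rightarrow> real \<Rightarrow> (real \<Rightarrow> real) \<Rightarrow> (real \<Rightarrow> real) \<Rightarrow> bool" where
  "Ai_rel r p q c d f h \<longleftrightarrow>
     (\<exists>f1 f2. C2_on 0 r f f1 f2 \<and>
        p * f2 0 - (1 - p) * f1 0 + c * f 0 = 0 \<and>
        q * f2 r + (1 - q) * f1 r + d * f r = 0 \<and>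
        (\<forall>x\<in>{0..r}. h x = f2 x / 2))"

definition resolvent_i :: "real \<Rightarrow> real \<Rightarrow> real \<Rightarrow> real \<Rightarrow> real \<Rightarrow> real \<Rightarrow> (real \<Rightarrow> real) \<Rightarrow> real \<Rightarrow> real" where
  "resolvent_i lam r p q c d g =
     (THE f. (\<exists>h. Ai_rel r p q c d f h \<and> (\<forall>x\<in>{0..r}. lam * f x - h x = g x)) \<and>
             (\<forall>x. x \<notin> {0..r} \<longrightarrow> f x = 0))"

text \<open>Graph of the operator A on C(S_u): f in the domain of A and A f = h on S_u.
  P i j is the measure p_{i,j}.\<close>
definition A_rel :: "nat \<Rightarrow> (nat \<Rightarrow> real) \<Rightarrow> (nat \<Rightarrow> real) \<Rightarrow> (nat \<Rightarrow> real) \<Rightarrow> (nat \<Rightarrow> real)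
     \<Rightarrow> (nat \<Rightarrow> real) \<Rightarrow> (nat \<Rightarrow> nat \<Rightarrow> (nat \<times> real) measure)
     \<Rightarrow> (nat \<times> real \<Rightarrow> real) \<Rightarrow> (nat \<times> real \<Rightarrow> real) \<Rightarrow> bool" where
  "A_rel N r p q c d P f h \<longleftrightarrow>
     (\<forall>i\<in>{1..N}. \<exists>f1 f2. C2_on 0 (r i) (\<lambda>x. f (i, x)) f1 f2 \<and>
        p i * f2 0 - (1 - p i) * f1 0 + c i * f (i, 0) = c i * integral\<^sup>L (P i 1) f \<and>
        q i * f2 (r i) + (1 - q i) * f1 (r i) + d i * f (i, r i) = d i * integral\<^sup>L (P i 2) f \<and>
        (\<forall>x\<in>{0..r i}. h (i, x) = f2 x / 2))"

definition a11 :: "real \<Rightarrow> real \<Rightarrow> real \<Rightarrow> real" where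
  "a11 lam p c = 2 * lam * p - sqrt (2 * lam) * (1 - p) + c"
definition a12 :: "real \<Rightarrow> real \<Rightarrow> real \<Rightarrow> real" where
  "a12 lam p c = 2 * lam * p + sqrt (2 * lam) * (1 - p) + c"
definition a21 :: "real \<Rightarrow> real \<Rightarrow> real \<Rightarrow> real \<Rightarrow> real" where
  "a21 lam r q d = exp (sqrt (2 * lam) * r) * (2 * lam * q + sqrt (2 * lam) * (1 - q) + d)"
definition a22 :: "real \<Rightarrow> real \<Rightarrow> real \<Rightarrow> real \<Rightarrow> real" where
  "a22 lam r q d = exp (- sqrt (2 * lam) * r) * (2 * lam * q - sqrt (2 * lam) * (1 - q) + d)"
definition Wdet :: "real \<Rightarrow> real \<Rightarrow> real \<Rightarrow> real \<Rightarrow> real \<Rightarrow> real \<Rightarrow> real" where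
  "Wdet lam r p q c d = a11 lam p c * a22 lam r q d - a12 lam p c * a21 lam r q d"

definition ell :: "real \<Rightarrow> (nat \<Rightarrow> real) \<Rightarrow> (nat \<Rightarrow> real) \<Rightarrow> (nat \<Rightarrow> real) \<Rightarrow> (nat \<Rightarrow> real)
     \<Rightarrow> (nat \<Rightarrow> real) \<Rightarrow> nat \<Rightarrow> nat \<Rightarrow> nat \<times> real \<Rightarrow> real" where
  "ell lam r p q c d i j = (\<lambda>(k, x).
     if k = i \<and> x \<in> {0..r i} then
       (let s = sqrt (2 * lam); W = Wdet lam (r i) (p i) (q i) (c i) (d i) in
        if j = 1 then c i / W * (a22 lam (r i) (q i) (d i) * exp (s * x) - a21 lam (r i) (q i) (d i) * exp (- s * x))
        else d i / W * (a11 lam (p i) (c i) * exp (- s * x) - a12 lam (p i) (c i) * exp (s * x)))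
     else 0)"

definition Rdu :: "real \<Rightarrow> nat \<Rightarrow> (nat \<Rightarrow> real) \<Rightarrow> (nat \<Rightarrow> real) \<Rightarrow> (nat \<Rightarrow> real) \<Rightarrow> (nat \<Rightarrow> real)
     \<Rightarrow> (nat \<Rightarrow> real) \<Rightarrow> (nat \<times> real \<Rightarrow> real) \<Rightarrow> nat \<times> real \<Rightarrow> real" where
  "Rdu lam N r p q c d g = (\<lambda>(i, x).
     if i \<in> {1..N} then resolvent_i lam (r i) (p i) (q i) (c i) (d i) (\<lambda>y. g (i, y)) x else 0)"

definition lin_sys :: "real \<Rightarrow> nat \<Rightarrow> (nat \<Rightarrow> real) \<Rightarrow> (nat \<Rightarrow> real) \<Rightarrow> (nat \<Rightarrow> real) \<Rightarrow> (nat \<Rightarrow> real)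
     \<Rightarrow> (nat \<Rightarrow> real) \<Rightarrow> (nat \<Rightarrow> nat \<Rightarrow> (nat \<times> real) measure) \<Rightarrow> (nat \<times> real \<Rightarrow> real)
     \<Rightarrow> (nat \<Rightarrow> nat \<Rightarrow> real) \<Rightarrow> bool" where
  "lin_sys lam N r p q c d P g u \<longleftrightarrow>
     (\<forall>i\<in>{1..N}. \<forall>j\<in>{1,2}.
        u i j = integral\<^sup>L (P i j) (Rdu lam N r p q c d g)
              + (\<Sum>k=1..N. \<Sum>l\<in>{1,2}. u k l * integral\<^sup>L (P i j) (ell lam r p q c d k l)))"

text \<open>Unknown vectors are indexed by {1..N} \<times> {1,2}; entries outside are fixed to 0.\<close>
definition idx_vec :: "nat \<Rightarrow> (nat \<Rightarrow> nat \<Rightarrow> real) \<Rightarrow> bool" where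
  "idx_vec N u \<longleftrightarrow> (\<forall>i j. i \<notin> {1..N} \<or> j \<notin> {1,2} \<longrightarrow> u i j = 0)"

definition usol :: "real \<Rightarrow> nat \<Rightarrow> (nat \<Rightarrow> real) \<Rightarrow> (nat \<Rightarrow> real) \<Rightarrow> (nat \<Rightarrow> real) \<Rightarrow> (nat \<Rightarrow> real)
     \<Rightarrow> (nat \<Rightarrow> real) \<Rightarrow> (nat \<Rightarrow> nat \<Rightarrow> (nat \<times> real) measure) \<Rightarrow> (nat \<times> real \<Rightarrow> real)
     \<Rightarrow> nat \<Rightarrow> nat \<Rightarrow> real" where
  "usol lam N r p q c d P g = (THE u. idx_vec N u \<and> lin_sys lam N r p q c d P g u)"

definition Rco :: "real \<Rightarrow> nat \<Rightarrow> (nat \<Rightarrow> real) \<Rightarrow> (nat \<Rightarrow> real) \<Rightarrow> (nat \<Rightarrow> real) \<Rightarrow> (nat \<Rightarrow> real)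
     \<Rightarrow> (nat \<Rightarrow> real) \<Rightarrow> (nat \<Rightarrow> nat \<Rightarrow> (nat \<times> real) measure) \<Rightarrow> (nat \<times> real \<Rightarrow> real)
     \<Rightarrow> nat \<times> real \<Rightarrow> real" where
  "Rco lam N r p q c d P g = (\<lambda>y. Rdu lam N r p q c d g y
     + (\<Sum>i=1..N. \<Sum>j\<in>{1,2}. usol lam N r p q c d P g i j * ell lam r p q c d i j y))"

end

theory Submission
  imports Defs
begin

lemma C2_transform:
  assumes "C2_on a b f f1 f2" "\<forall>x\<in>{a..b}. f x = g x"
  shows "C2_on a b g f1 f2"
  using assms unfolding C2_on_def
  by (auto intro: has_field_derivative_transform_within[where d=1])

lemma C2_lin:
  assumes "C2_on a b f f1 f2" "C2_on a b g g1 g2"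
  shows "C2_on a b (\<lambda>x. f x + k * g x) (\<lambda>x. f1 x + k * g1 x) (\<lambda>x. f2 x + k * g2 x)"
  using assms unfolding C2_on_def
  by (auto intro!: derivative_eq_intros continuous_intros)

lemma C2_cont:
  assumes "C2_on a b f f1 f2" shows "continuous_on {a..b} f"
  using assms unfolding C2_on_def by (auto intro: DERIV_continuous_on)

lemma s_facts:
  assumes "lam > (0::real)"
  shows "sqrt (2*lam) > 0" "sqrt (2*lam) * sqrt (2*lam) = 2 * lam"
  using assms by auto

lemma W_neg:
  assumes "lam > 0" "r > 0" "p \<in> {0..1}" "q \<in> {0..1}" "c > 0" "d > 0"
  shows "Wdet lam r p q c d < 0"
proof -
  define s where "s = sqrt (2*lam)"
  have s: "s > 0" using assms s_def by auto
  define K where "K = 2 * lam * q + s * (1 - q) + d"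
  have K: "K > 0" using assms s unfolding K_def by (auto intro!: add_nonneg_pos add_nonneg_nonneg mult_nonneg_nonneg)
  have a12: "a12 lam p c > 0" using assms s unfolding a12_def s_def[symmetric]
    by (auto intro!: add_nonneg_pos add_nonneg_nonneg mult_nonneg_nonneg)
  have a11: "\<bar>a11 lam p c\<bar> \<le> a12 lam p c" using assms s unfolding a11_def a12_def s_def[symmetric]
    by (auto simp: abs_le_iff intro!: mult_nonneg_nonneg)
  have "\<bar>2 * lam * q - s * (1 - q) + d\<bar> \<le> K" using assms s unfolding K_def
    by (auto simp: abs_le_iff intro!: mult_nonneg_nonneg)
  hence "\<bar>a22 lam r q d\<bar> \<le> exp (- s * r) * K" unfolding a22_def s_def[symmetric]
    by (simp add: abs_mult)
  also have "\<dots> < exp (s * r) * K" using K s assms by auto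
  also have "\<dots> = a21 lam r q d" unfolding a21_def K_def s_def ..
  finally have a22: "\<bar>a22 lam r q d\<bar> < a21 lam r q d" .
  have "a11 lam p c * a22 lam r q d \<le> \<bar>a11 lam p c\<bar> * \<bar>a22 lam r q d\<bar>"
    by (metis abs_ge_self abs_mult)
  also have "\<dots> \<le> a12 lam p c * \<bar>a22 lam r q d\<bar>" using a11 by (simp add: mult_right_mono)
  also have "\<dots> < a12 lam p c * a21 lam r q d" using a12 a22 by simp
  finally show ?thesis unfolding Wdet_def by simp
qed

lemma expcomb:
  assumes "lam > 0"
  defines "s \<equiv> sqrt (2*lam)"
  shows "C2_on 0 r (\<lambda>x. A * exp (s*x) + B * exp (- s * x))
     (\<lambda>x. s * A * exp (s*x) - s * B * exp (- s * x))
     (\<lambda>x. 2 * lam * (A * exp (s*x) + B * exp (- s * x)))"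
    "p * (2 * lam * (A * exp (s*0) + B * exp (- s * 0))) - (1 - p) * (s * A * exp (s*0) - s * B * exp (- s * 0))
      + c * (A * exp (s*0) + B * exp (- s * 0)) = A * a11 lam p c + B * a12 lam p c"
    "q * (2 * lam * (A * exp (s*r) + B * exp (- s * r))) + (1 - q) * (s * A * exp (s*r) - s * B * exp (- s * r))
      + d * (A * exp (s*r) + B * exp (- s * r)) = A * a21 lam r q d + B * a22 lam r q d"
proof -
  have ss: "s * s = 2 * lam" using assms s_facts by (simp add: s_def)
  have ss2: "\<And>y. s * (s * y) = 2 * lam * y" using ss by (metis mult.assoc)
  show "C2_on 0 r (\<lambda>x. A * exp (s*x) + B * exp (- s * x))
     (\<lambda>x. s * A * exp (s*x) - s * B * exp (- s * x))
     (\<lambda>x. 2 * lam * (A * exp (s*x) + B * exp (- s * x)))"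
    unfolding C2_on_def
    by (auto intro!: derivative_eq_intros continuous_intros simp: algebra_simps ss2)
  show "p * (2 * lam * (A * exp (s*0) + B * exp (- s * 0))) - (1 - p) * (s * A * exp (s*0) - s * B * exp (- s * 0))
      + c * (A * exp (s*0) + B * exp (- s * 0)) = A * a11 lam p c + B * a12 lam p c"
    unfolding a11_def a12_def s_def by (simp add: algebra_simps)
  show "q * (2 * lam * (A * exp (s*r) + B * exp (- s * r))) + (1 - q) * (s * A * exp (s*r) - s * B * exp (- s * r))
      + d * (A * exp (s*r) + B * exp (- s * r)) = A * a21 lam r q d + B * a22 lam r q d"
    unfolding a21_def a22_def s_def by (simp add: algebra_simps)
qed

lemma hom_form:
  assumes lam: "lam > 0" and r: "r > 0"
    and C: "C2_on 0 r w w1 w2" and E: "\<forall>x\<in>{0..r}. w2 x = 2 * lam * w x"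
  defines "s \<equiv> sqrt (2*lam)"
  shows "\<exists>A B. \<forall>x\<in>{0..r}. w x = A * exp (s*x) + B * exp (- s * x) \<and>
                        w1 x = s * A * exp (s*x) - s * B * exp (- s * x)"
proof -
  have s: "s > 0" and ss: "s * s = 2 * lam" using lam s_facts by (auto simp: s_def)
  have dw: "\<And>x. x \<in> {0..r} \<Longrightarrow> (w has_real_derivative w1 x) (at x within {0..r})"
   and dw1: "\<And>x. x \<in> {0..r} \<Longrightarrow> (w1 has_real_derivative w2 x) (at x within {0..r})"
    using C unfolding C2_on_def by auto
  have "\<exists>C. \<forall>x\<in>{0..r}. (w1 x - s * w x) * exp (s * x) = C"
  proof (rule has_field_derivative_zero_constant)
    fix x assume x: "x \<in> {0..r}"
    have "((\<lambda>x. (w1 x - s * w x) * exp (s * x)) has_real_derivative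
        (w2 x - s * w1 x) * exp (s * x) + (w1 x - s * w x) * (exp (s * x) * s)) (at x within {0..r})"
      using dw[OF x] dw1[OF x] by (auto intro!: derivative_eq_intros)
    moreover have "(w2 x - s * w1 x) * exp (s * x) + (w1 x - s * w x) * (exp (s * x) * s) = 0"
    proof -
      have ss2: "s * (s * y) = 2 * lam * y" for y using ss by (metis mult.assoc)
      show ?thesis using E x by (simp add: algebra_simps ss2)
    qed
    ultimately show "((\<lambda>x. (w1 x - s * w x) * exp (s * x)) has_real_derivative 0) (at x within {0..r})"
      by simp
  qed auto
  then obtain C where hC: "\<And>x. x\<in>{0..r} \<Longrightarrow> (w1 x - s * w x) * exp (s * x) = C" by blast
  have z: "\<And>x. x\<in>{0..r} \<Longrightarrow> w1 x = s * w x + C * exp (- s * x)"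
  proof -
    fix x assume "x \<in> {0..r}"
    from hC[OF this] have "(w1 x - s * w x) * exp (s * x) * exp (- s * x) = C * exp (- s * x)" by simp
    hence "w1 x - s * w x = C * exp (- s * x)" by (simp add: mult.assoc flip: exp_add)
    thus "w1 x = s * w x + C * exp (- s * x)" by simp
  qed
  have "\<exists>D. \<forall>x\<in>{0..r}. w x * exp (- s * x) + C / (2 * s) * exp (- 2 * s * x) = D"
  proof (rule has_field_derivative_zero_constant)
    fix x assume x: "x \<in> {0..r}"
    have "((\<lambda>x. w x * exp (- s * x) + C / (2 * s) * exp (- 2 * s * x)) has_real_derivative
        w1 x * exp (- s * x) + w x * (exp (- s * x) * (- s)) + C / (2 * s) * (exp (- 2 * s * x) * (- 2 * s))) (at x within {0..r})"
      using dw[OF x] by (auto intro!: derivative_eq_intros)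
    moreover have "w1 x * exp (- s * x) + w x * (exp (- s * x) * (- s)) + C / (2 * s) * (exp (- 2 * s * x) * (- 2 * s)) = 0"
    proof -
      have e: "exp (- 2 * s * x) = exp (- s * x) * exp (- s * x)" by (simp flip: exp_add)
      show ?thesis unfolding e using z[OF x] s by (simp add: field_simps)
    qed
    ultimately show "((\<lambda>x. w x * exp (- s * x) + C / (2 * s) * exp (- 2 * s * x)) has_real_derivative 0) (at x within {0..r})"
      by simp
  qed auto
  then obtain D where hD: "\<And>x. x\<in>{0..r} \<Longrightarrow> w x * exp (- s * x) + C / (2 * s) * exp (- 2 * s * x) = D" by blast
  have wf: "\<And>x. x\<in>{0..r} \<Longrightarrow> w x = D * exp (s*x) + (- C / (2 * s)) * exp (- s * x)"
  proof -
    fix x assume x: "x \<in> {0..r}"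
    have e: "exp (- 2 * s * x) = exp (- s * x) * exp (- s * x)" by (simp flip: exp_add)
    have e2: "exp (s * x) * exp (- s * x) = 1" by (simp flip: exp_add)
    from hD[OF x] have "(w x * exp (- s * x) + C / (2 * s) * exp (- 2 * s * x)) * exp (s * x) = D * exp (s*x)" by simp
    thus "w x = D * exp (s*x) + (- C / (2 * s)) * exp (- s * x)"
    proof -
      have "(w x * exp (- s * x) + C / (2 * s) * (exp (- s * x) * exp (- s * x))) * exp (s * x)
         = w x * (exp (s * x) * exp (- s * x)) + C / (2 * s) * exp (- s * x) * (exp (s * x) * exp (- s * x))"
        by (simp add: algebra_simps)
      also have "\<dots> = w x + C / (2 * s) * exp (- s * x)" unfolding e2 by simp
      finally show ?thesis using \<open>(w x * exp (- s * x) + C / (2 * s) * exp (- 2 * s * x)) * exp (s * x) = D * exp (s*x)\<close>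
        unfolding e by simp
    qed
  qed
  show ?thesis
  proof (intro exI ballI conjI)
    fix x assume x: "x \<in> {0..r}"
    show "w x = D * exp (s*x) + (- C / (2 * s)) * exp (- s * x)" using wf[OF x] .
    show "w1 x = s * D * exp (s*x) - s * (- C / (2 * s)) * exp (- s * x)"
    proof -
      have "s * w x = s * D * exp (s*x) - C / 2 * exp (- s * x)" using wf[OF x] s by (simp add: field_simps)
      thus ?thesis using z[OF x] s by (simp add: field_simps)
    qed
  qed
qed

lemma hom_zero:
  assumes lam: "lam > 0" and r: "r > 0" "p \<in> {0..1}" "q \<in> {0..1}" "c > 0" "d > 0"
    and C: "C2_on 0 r w w1 w2" and E: "\<forall>x\<in>{0..r}. w2 x = 2 * lam * w x"
    and B0: "p * w2 0 - (1 - p) * w1 0 + c * w 0 = 0"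
    and Br: "q * w2 r + (1 - q) * w1 r + d * w r = 0"
  shows "\<forall>x\<in>{0..r}. w x = 0"
proof -
  define s where "s = sqrt (2*lam)"
  obtain A B where AB: "\<forall>x\<in>{0..r}. w x = A * exp (s*x) + B * exp (- s * x) \<and>
                        w1 x = s * A * exp (s*x) - s * B * exp (- s * x)"
    using hom_form[OF lam r(1) C E] unfolding s_def by blast
  have 0: "0 \<in> {0..r}" "r \<in> {0..r}" using r by auto
  have e1: "A * a11 lam p c + B * a12 lam p c = 0"
    using B0 E 0 AB expcomb(2)[OF lam, where p=p and A=A and B=B and c=c] unfolding s_def by simp
  have e2: "A * a21 lam r q d + B * a22 lam r q d = 0"
    using Br E 0 AB expcomb(3)[OF lam, where q=q and A=A and B=B and r=r and d=d] unfolding s_def by simp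
  have W: "Wdet lam r p q c d \<noteq> 0" using W_neg[OF assms(1-6)] by simp
  define a11' where "a11' = a11 lam p c"
  define a12' where "a12' = a12 lam p c"
  define a21' where "a21' = a21 lam r q d"
  define a22' where "a22' = a22 lam r q d"
  have W': "Wdet lam r p q c d = a11' * a22' - a12' * a21'" unfolding Wdet_def a11'_def a12'_def a21'_def a22'_def ..
  have f1: "A * a11' = - B * a12'" "A * a21' = - B * a22'" using e1 e2 unfolding a11'_def a12'_def a21'_def a22'_def by linarith+
  have "A * Wdet lam r p q c d = a22' * (A * a11') - a12' * (A * a21')" unfolding W' by (simp add: algebra_simps)
  also have "\<dots> = 0" unfolding f1 by (simp add: algebra_simps)
  finally have A0: "A = 0" using W by simp
  have "B * Wdet lam r p q c d = a11' * (B * a22') - a21' * (B * a12')" unfolding W' by (simp add: algebra_simps)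
  also have "\<dots> = 0"
  proof -
    have f2: "B * a22' = - (A * a21')" "B * a12' = - (A * a11')" using f1 by linarith+
    show ?thesis unfolding f2 by (simp add: algebra_simps)
  qed
  finally have B0': "B = 0" using W by simp
  show ?thesis using AB A0 B0' by simp
qed

lemma res_exists:
  assumes lam: "lam > 0" and r: "r > 0" "p \<in> {0..1}" "q \<in> {0..1}" "c > 0" "d > 0"
    and g: "continuous_on {0..r} g0"
  shows "\<exists>f f1 f2. C2_on 0 r f f1 f2 \<and> (\<forall>x\<in>{0..r}. f2 x = 2 * lam * f x - 2 * g0 x) \<and>
     p * f2 0 - (1 - p) * f1 0 + c * f 0 = 0 \<and> q * f2 r + (1 - q) * f1 r + d * f r = 0"
proof -
  define s where "s = sqrt (2*lam)"
  have s: "s > 0" and ss: "s * s = 2 * lam" using lam s_facts by (auto simp: s_def)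
  have ss2: "s * (s * y) = 2 * lam * y" for y using ss by (metis mult.assoc)
  define U where "U x = integral {0..x} (\<lambda>y. - exp (- s * y) * g0 y / s)" for x
  define V where "V x = integral {0..x} (\<lambda>y. exp (s * y) * g0 y / s)" for x
  have cU: "continuous_on {0..r} (\<lambda>y. - exp (- s * y) * g0 y / s)" using g s by (intro continuous_intros) auto
  have cV: "continuous_on {0..r} (\<lambda>y. exp (s * y) * g0 y / s)" using g s by (intro continuous_intros) auto
  have dU: "\<And>x. x \<in> {0..r} \<Longrightarrow> (U has_real_derivative (- exp (- s * x) * g0 x / s)) (at x within {0..r})"
    unfolding U_def has_real_derivative_iff_has_vector_derivative
    by (rule integral_has_vector_derivative[OF cU])
  have dV: "\<And>x. x \<in> {0..r} \<Longrightarrow> (V has_real_derivative (exp (s * x) * g0 x / s)) (at x within {0..r})"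
    unfolding V_def has_real_derivative_iff_has_vector_derivative
    by (rule integral_has_vector_derivative[OF cV])
  have U0: "U 0 = 0" and V0: "V 0 = 0" unfolding U_def V_def by auto
  define a11' where "a11' = a11 lam p c"
  define a12' where "a12' = a12 lam p c"
  define a21' where "a21' = a21 lam r q d"
  define a22' where "a22' = a22 lam r q d"
  define W where "W = Wdet lam r p q c d"
  have W': "W = a11' * a22' - a12' * a21'" unfolding W_def Wdet_def a11'_def a12'_def a21'_def a22'_def ..
  have Wn: "W \<noteq> 0" using W_neg[OF assms(1-6)] W_def by simp
  define k1 where "k1 = 2 * p * g0 0"
  define k2 where "k2 = 2 * q * g0 r - U r * a21' - V r * a22'"
  define \<alpha> where "\<alpha> = (k1 * a22' - a12' * k2) / W"
  define \<beta> where "\<beta> = (a11' * k2 - a21' * k1) / W"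
  have "\<alpha> * a11' + \<beta> * a12' = ((k1 * a22' - a12' * k2) * a11' + (a11' * k2 - a21' * k1) * a12') / W"
    unfolding \<alpha>_def \<beta>_def by (simp add: add_divide_distrib)
  also have "\<dots> = k1 * W / W" unfolding W' by (simp add: algebra_simps)
  finally have sol1: "\<alpha> * a11' + \<beta> * a12' = k1" using Wn by simp
  have "\<alpha> * a21' + \<beta> * a22' = ((k1 * a22' - a12' * k2) * a21' + (a11' * k2 - a21' * k1) * a22') / W"
    unfolding \<alpha>_def \<beta>_def by (simp add: add_divide_distrib)
  also have "\<dots> = k2 * W / W" unfolding W' by (simp add: algebra_simps)
  finally have sol2: "\<alpha> * a21' + \<beta> * a22' = k2" using Wn by simp
  define f where "f x = exp (s*x) * (\<alpha> + U x) + exp (- s * x) * (\<beta> + V x)" for x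
  define f1 where "f1 x = s * exp (s*x) * (\<alpha> + U x) - s * exp (- s * x) * (\<beta> + V x)" for x
  define f2 where "f2 x = 2 * lam * f x - 2 * g0 x" for x
  have e2: "\<And>x. exp (s * x) * exp (- s * x) = 1" by (simp flip: exp_add)
  have df: "(f has_real_derivative f1 x) (at x within {0..r})" if x: "x \<in> {0..r}" for x
  proof -
    have "(f has_real_derivative (exp (s*x) * s * (\<alpha> + U x) + exp (s*x) * (- exp (- s * x) * g0 x / s)
       + (exp (- s*x) * (- s) * (\<beta> + V x) + exp (- s*x) * (exp (s * x) * g0 x / s)))) (at x within {0..r})"
      unfolding f_def[abs_def] using dU[OF x] dV[OF x] by (auto intro!: derivative_eq_intros)
    moreover have "exp (s*x) * s * (\<alpha> + U x) + exp (s*x) * (- exp (- s * x) * g0 x / s)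
       + (exp (- s*x) * (- s) * (\<beta> + V x) + exp (- s*x) * (exp (s * x) * g0 x / s)) = f1 x"
    proof -
      have "exp (s*x) * (- exp (- s * x) * g0 x / s) + exp (- s*x) * (exp (s * x) * g0 x / s) = 0"
        by (simp add: algebra_simps)
      thus ?thesis unfolding f1_def by (simp add: algebra_simps)
    qed
    ultimately show ?thesis by simp
  qed
  have df1: "(f1 has_real_derivative f2 x) (at x within {0..r})" if x: "x \<in> {0..r}" for x
  proof -
    have "(f1 has_real_derivative (s * (exp (s*x) * s) * (\<alpha> + U x) + s * exp (s*x) * (- exp (- s * x) * g0 x / s)
       - (s * (exp (- s*x) * (- s)) * (\<beta> + V x) + s * exp (- s*x) * (exp (s * x) * g0 x / s)))) (at x within {0..r})"
      unfolding f1_def[abs_def] using dU[OF x] dV[OF x] by (auto intro!: derivative_eq_intros)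
    moreover have "s * (exp (s*x) * s) * (\<alpha> + U x) + s * exp (s*x) * (- exp (- s * x) * g0 x / s)
       - (s * (exp (- s*x) * (- s)) * (\<beta> + V x) + s * exp (- s*x) * (exp (s * x) * g0 x / s)) = f2 x"
    proof -
      have a: "s * exp (s*x) * (- exp (- s * x) * g0 x / s) = - g0 x"
        using s e2[of x] by (simp add: field_simps)
      have b: "s * exp (- s*x) * (exp (s * x) * g0 x / s) = g0 x"
        using s e2[of x] by (simp add: field_simps)
      show ?thesis unfolding a b f2_def f_def by (simp add: algebra_simps ss2)
    qed
    ultimately show ?thesis by simp
  qed
  have cf: "continuous_on {0..r} f" using df by (rule DERIV_continuous_on)
  have cf2: "continuous_on {0..r} f2" unfolding f2_def[abs_def] using cf g by (auto intro!: continuous_intros)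
  have C: "C2_on 0 r f f1 f2" unfolding C2_on_def using df df1 cf2 by auto
  have B0: "p * f2 0 - (1 - p) * f1 0 + c * f 0 = 0"
    using sol1 unfolding f2_def f1_def f_def U0 V0 k1_def a11'_def a12'_def a11_def a12_def s_def
    by (simp add: algebra_simps)
  have Br: "q * f2 r + (1 - q) * f1 r + d * f r = 0"
    using sol2 unfolding f2_def f1_def f_def k2_def a21'_def a22'_def a21_def a22_def s_def
    by (simp add: algebra_simps)
  show ?thesis using C B0 Br by (intro exI[of _ f] exI[of _ f1] exI[of _ f2]) (auto simp: f2_def)
qed

lemma Q_props:
  assumes "Ai_rel r p q c d F h" "\<forall>x\<in>{0..r}. lam * F x - h x = g0 x"
  shows "\<exists>F1 F2. C2_on 0 r F F1 F2 \<and> (\<forall>x\<in>{0..r}. F2 x = 2 * lam * F x - 2 * g0 x) \<and>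
     p * F2 0 - (1 - p) * F1 0 + c * F 0 = 0 \<and> q * F2 r + (1 - q) * F1 r + d * F r = 0"
proof -
  obtain F1 F2 where "C2_on 0 r F F1 F2" "p * F2 0 - (1 - p) * F1 0 + c * F 0 = 0"
    "q * F2 r + (1 - q) * F1 r + d * F r = 0" "\<forall>x\<in>{0..r}. h x = F2 x / 2"
    using assms(1) unfolding Ai_rel_def by blast
  note X = this
  have "\<forall>x\<in>{0..r}. F2 x = 2 * lam * F x - 2 * g0 x"
  proof
    fix x assume x: "x \<in> {0..r}"
    have "h x = F2 x / 2" "lam * F x - h x = g0 x" using X(4) assms(2) x by auto
    thus "F2 x = 2 * lam * F x - 2 * g0 x" by linarith
  qed
  show ?thesis apply (rule exI[where x=F1], rule exI[where x=F2]) using X \<open>\<forall>x\<in>{0..r}. F2 x = _\<close> by auto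
qed

lemma res_prop:
  assumes lam: "lam > 0" and r: "r > 0" "p \<in> {0..1}" "q \<in> {0..1}" "c > 0" "d > 0"
    and g: "continuous_on {0..r} g0"
  shows "\<exists>R1 R2. C2_on 0 r (resolvent_i lam r p q c d g0) R1 R2 \<and>
     (\<forall>x\<in>{0..r}. R2 x = 2 * lam * resolvent_i lam r p q c d g0 x - 2 * g0 x) \<and>
     p * R2 0 - (1 - p) * R1 0 + c * resolvent_i lam r p q c d g0 0 = 0 \<and>
     q * R2 r + (1 - q) * R1 r + d * resolvent_i lam r p q c d g0 r = 0"
proof -
  define Q where "Q F \<longleftrightarrow> (\<exists>h. Ai_rel r p q c d F h \<and> (\<forall>x\<in>{0..r}. lam * F x - h x = g0 x)) \<and>
             (\<forall>x. x \<notin> {0..r} \<longrightarrow> F x = 0)" for F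
  have ex: "\<exists>F. Q F"
  proof -
    obtain f f1 f2 where f: "C2_on 0 r f f1 f2" "\<forall>x\<in>{0..r}. f2 x = 2 * lam * f x - 2 * g0 x"
      "p * f2 0 - (1 - p) * f1 0 + c * f 0 = 0" "q * f2 r + (1 - q) * f1 r + d * f r = 0"
      using res_exists[OF assms] by blast
    define F where "F x = (if x \<in> {0..r} then f x else 0)" for x
    have CF: "C2_on 0 r F f1 f2" using C2_transform[OF f(1)] by (simp add: F_def)
    have "Ai_rel r p q c d F (\<lambda>x. f2 x / 2)" unfolding Ai_rel_def
      apply (rule exI[where x=f1], rule exI[where x=f2]) using CF f r(1) by (auto simp: F_def)
    moreover have "\<forall>x\<in>{0..r}. lam * F x - f2 x / 2 = g0 x" using f(2) by (simp add: F_def field_simps)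
    ultimately have "Q F" unfolding Q_def by (auto simp: F_def)
    thus ?thesis by blast
  qed
  have un: "F = G" if QFG: "Q F" "Q G" for F G
  proof
    fix x
    obtain hF hG where hF: "Ai_rel r p q c d F hF" "\<forall>x\<in>{0..r}. lam * F x - hF x = g0 x"
      and hG: "Ai_rel r p q c d G hG" "\<forall>x\<in>{0..r}. lam * G x - hG x = g0 x"
      using QFG unfolding Q_def by blast
    obtain F1 F2 where F: "C2_on 0 r F F1 F2" "\<forall>x\<in>{0..r}. F2 x = 2 * lam * F x - 2 * g0 x"
      "p * F2 0 - (1 - p) * F1 0 + c * F 0 = 0" "q * F2 r + (1 - q) * F1 r + d * F r = 0"
      using Q_props[OF hF] by blast
    obtain G1 G2 where G: "C2_on 0 r G G1 G2" "\<forall>x\<in>{0..r}. G2 x = 2 * lam * G x - 2 * g0 x"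
      "p * G2 0 - (1 - p) * G1 0 + c * G 0 = 0" "q * G2 r + (1 - q) * G1 r + d * G r = 0"
      using Q_props[OF hG] by blast
    have "\<forall>x\<in>{0..r}. F x + (-1) * G x = 0"
    proof (rule hom_zero[OF assms(1-6) C2_lin[OF F(1) G(1)]])
      show "\<forall>x\<in>{0..r}. F2 x + - 1 * G2 x = 2 * lam * (F x + - 1 * G x)"
      proof
        fix x assume x: "x \<in> {0..r}"
        have "F2 x = 2 * lam * F x - 2 * g0 x" "G2 x = 2 * lam * G x - 2 * g0 x" using F(2) G(2) x by auto
        thus "F2 x + - 1 * G2 x = 2 * lam * (F x + - 1 * G x)" by (simp add: algebra_simps)
      qed
      show "p * (F2 0 + - 1 * G2 0) - (1 - p) * (F1 0 + - 1 * G1 0) + c * (F 0 + - 1 * G 0) = 0"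
        using F(3) G(3) by (simp add: algebra_simps)
      show "q * (F2 r + - 1 * G2 r) + (1 - q) * (F1 r + - 1 * G1 r) + d * (F r + - 1 * G r) = 0"
        using F(4) G(4) by (simp add: algebra_simps)
    qed
    thus "F x = G x" using QFG unfolding Q_def by (cases "x \<in> {0..r}") auto
  qed
  have "Q (resolvent_i lam r p q c d g0)" unfolding resolvent_i_def
    using theI'[of Q] ex un unfolding Q_def by blast
  then obtain h where "Ai_rel r p q c d (resolvent_i lam r p q c d g0) h"
     "\<forall>x\<in>{0..r}. lam * resolvent_i lam r p q c d g0 x - h x = g0 x" unfolding Q_def by blast
  from Q_props[OF this] show ?thesis .
qed

lemma Su_UN: "Su N r = (\<Union>i\<in>{1..N}. {i} \<times> {0..r i})"
  unfolding Su_def by auto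

lemma cont_Su:
  assumes "\<forall>i\<in>{1..N}. continuous_on {0..r i} (\<lambda>x. \<phi> (i, x))"
  shows "continuous_on (Su N r) \<phi>"
  unfolding Su_UN
proof (rule continuous_on_closed_Union)
  fix i assume i: "i \<in> {1..N}"
  show "closed ({i} \<times> {0..r i})" by (intro closed_Times) auto
  have "continuous_on ({i} \<times> {0..r i}) (\<lambda>y. \<phi> (i, snd y))"
    by (rule continuous_on_compose2[OF assms[rule_format, OF i] continuous_on_snd]) auto
  thus "continuous_on ({i} \<times> {0..r i}) \<phi>" by (rule continuous_on_cong[THEN iffD1, rotated 2]) auto
qed auto

lemma compact_Su: "compact (Su N r)"
  unfolding Su_UN by (intro compact_UN compact_Times) auto

lemma space_P:
  assumes "sets M = sets (restrict_space borel (Su N r))"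
  shows "space M = Su N r"
  using sets_eq_imp_space_eq[OF assms] by (simp add: space_restrict_space)

lemma integ_Su:
  assumes S: "sets M = sets (restrict_space borel (Su N r))" and E: "emeasure M (space M) \<le> 1"
    and c: "continuous_on (Su N r) (\<phi> :: nat \<times> real \<Rightarrow> real)"
  shows "integrable M \<phi>"
proof -
  interpret finite_measure M using E by (intro finite_measureI) (auto simp: top_unique)
  have "compact (\<phi> ` Su N r)" by (rule compact_continuous_image[OF c compact_Su])
  then obtain B where B: "\<forall>y\<in>\<phi> ` Su N r. norm y \<le> B" using compact_imp_bounded bounded_iff by metis
  show ?thesis
  proof (rule integrable_const_bound[where B=B])
    show "AE x in M. norm (\<phi> x) \<le> B" using B space_P[OF S] by (intro AE_I2) auto
    show "\<phi> \<in> borel_measurable M"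
      by (subst measurable_cong_sets[OF S refl]) (rule borel_measurable_continuous_on_restrict[OF c])
  qed
qed

lemma piece:
  assumes lam: "lam > 0" and prm: "r > 0" "p \<in> {0..1}" "q \<in> {0..1}" "c > 0" "d > 0"
    and R: "C2_on 0 r R R1 R2" "\<forall>x\<in>{0..r}. R2 x = 2 * lam * R x - 2 * g0 x"
      "p * R2 0 - (1 - p) * R1 0 + c * R 0 = 0" "q * R2 r + (1 - q) * R1 r + d * R r = 0"
  defines "s \<equiv> sqrt (2 * lam)" and "W \<equiv> Wdet lam r p q c d"
  defines "L1 \<equiv> \<lambda>x. c / W * (a22 lam r q d * exp (s * x) - a21 lam r q d * exp (- s * x))"
    and "L2 \<equiv> \<lambda>x. d / W * (a11 lam p c * exp (- s * x) - a12 lam p c * exp (s * x))"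
  shows "\<exists>f1 f2. C2_on 0 r (\<lambda>x. R x + v1 * L1 x + v2 * L2 x) f1 f2 \<and>
     (\<forall>x\<in>{0..r}. f2 x = 2 * lam * (R x + v1 * L1 x + v2 * L2 x) - 2 * g0 x) \<and>
     p * f2 0 - (1 - p) * f1 0 + c * (R 0 + v1 * L1 0 + v2 * L2 0) = c * v1 \<and>
     q * f2 r + (1 - q) * f1 r + d * (R r + v1 * L1 r + v2 * L2 r) = d * v2"
proof -
  have Wn: "W \<noteq> 0" using W_neg[OF lam prm] W_def by simp
  define A1 where "A1 = c / W * a22 lam r q d"
  define B1 where "B1 = - (c / W * a21 lam r q d)"
  define A2 where "A2 = - (d / W * a12 lam p c)"
  define B2 where "B2 = d / W * a11 lam p c"
  define E where "E A B x = A * exp (s*x) + B * exp (- s * x)" for A B x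
  define E1 where "E1 A B x = s * A * exp (s*x) - s * B * exp (- s * x)" for A B x
  define E2 where "E2 A B x = 2 * lam * (A * exp (s*x) + B * exp (- s * x))" for A B x
  have L1E: "L1 = E A1 B1" unfolding L1_def E_def A1_def B1_def by (auto simp: algebra_simps)
  have L2E: "L2 = E A2 B2" unfolding L2_def E_def A2_def B2_def by (auto simp: algebra_simps)
  have CE: "C2_on 0 r (E A B) (E1 A B) (E2 A B)" for A B
    using expcomb(1)[OF lam, where A=A and B=B and r=r] unfolding E_def E1_def E2_def s_def by (simp add: fun_eq_iff)
  have BE0: "p * E2 A B 0 - (1 - p) * E1 A B 0 + c * E A B 0 = A * a11 lam p c + B * a12 lam p c" for A B
    using expcomb(2)[OF lam, where A=A and B=B and p=p and c=c] unfolding E_def E1_def E2_def s_def by simp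
  have BEr: "q * E2 A B r + (1 - q) * E1 A B r + d * E A B r = A * a21 lam r q d + B * a22 lam r q d" for A B
    using expcomb(3)[OF lam, where A=A and B=B and q=q and d=d and r=r] unfolding E_def E1_def E2_def s_def by simp
  have W': "W = a11 lam p c * a22 lam r q d - a12 lam p c * a21 lam r q d" unfolding W_def Wdet_def ..
  have k1: "A1 * a11 lam p c + B1 * a12 lam p c = c"
  proof -
    have "A1 * a11 lam p c + B1 * a12 lam p c = c / W * (a11 lam p c * a22 lam r q d - a12 lam p c * a21 lam r q d)"
      unfolding A1_def B1_def by (simp add: algebra_simps)
    hence "A1 * a11 lam p c + B1 * a12 lam p c = c / W * W" unfolding W' .
    thus ?thesis using Wn by simp
  qed
  have k2: "A1 * a21 lam r q d + B1 * a22 lam r q d = 0" unfolding A1_def B1_def by (simp add: algebra_simps)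
  have k3: "A2 * a11 lam p c + B2 * a12 lam p c = 0" unfolding A2_def B2_def by (simp add: algebra_simps)
  have k4: "A2 * a21 lam r q d + B2 * a22 lam r q d = d"
  proof -
    have "A2 * a21 lam r q d + B2 * a22 lam r q d = d / W * (a11 lam p c * a22 lam r q d - a12 lam p c * a21 lam r q d)"
      unfolding A2_def B2_def by (simp add: algebra_simps)
    hence "A2 * a21 lam r q d + B2 * a22 lam r q d = d / W * W" unfolding W' .
    thus ?thesis using Wn by simp
  qed
  define f1 where "f1 x = R1 x + v1 * E1 A1 B1 x + v2 * E1 A2 B2 x" for x
  define f2 where "f2 x = R2 x + v1 * E2 A1 B1 x + v2 * E2 A2 B2 x" for x
  have C: "C2_on 0 r (\<lambda>x. R x + v1 * L1 x + v2 * L2 x) f1 f2"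
    unfolding L1E L2E f1_def[abs_def] f2_def[abs_def]
    using C2_lin[OF C2_lin[OF R(1) CE[of A1 B1], of v1] CE[of A2 B2], of v2] .
  have D: "\<forall>x\<in>{0..r}. f2 x = 2 * lam * (R x + v1 * L1 x + v2 * L2 x) - 2 * g0 x"
    using R(2) unfolding f2_def L1E L2E E2_def E_def by (auto simp: algebra_simps)
  have "p * f2 0 - (1 - p) * f1 0 + c * (R 0 + v1 * L1 0 + v2 * L2 0) =
     (p * R2 0 - (1 - p) * R1 0 + c * R 0) + v1 * (p * E2 A1 B1 0 - (1 - p) * E1 A1 B1 0 + c * E A1 B1 0)
     + v2 * (p * E2 A2 B2 0 - (1 - p) * E1 A2 B2 0 + c * E A2 B2 0)"
    unfolding f1_def f2_def L1E L2E by (simp add: algebra_simps)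
  also have "\<dots> = c * v1" unfolding BE0 k1 k3 R(3) by simp
  finally have B0: "p * f2 0 - (1 - p) * f1 0 + c * (R 0 + v1 * L1 0 + v2 * L2 0) = c * v1" .
  have "q * f2 r + (1 - q) * f1 r + d * (R r + v1 * L1 r + v2 * L2 r) =
     (q * R2 r + (1 - q) * R1 r + d * R r) + v1 * (q * E2 A1 B1 r + (1 - q) * E1 A1 B1 r + d * E A1 B1 r)
     + v2 * (q * E2 A2 B2 r + (1 - q) * E1 A2 B2 r + d * E A2 B2 r)"
    unfolding f1_def f2_def L1E L2E by (simp add: algebra_simps)
  also have "\<dots> = d * v2" unfolding BEr k2 k4 R(4) by simp
  finally have Br: "q * f2 r + (1 - q) * f1 r + d * (R r + v1 * L1 r + v2 * L2 r) = d * v2" .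
  show ?thesis apply (rule exI[where x=f1], rule exI[where x=f2]) using C D B0 Br by blast
qed

theorem theorem6:
  fixes N :: nat and r p q c d :: "nat \<Rightarrow> real"
    and P :: "nat \<Rightarrow> nat \<Rightarrow> (nat \<times> real) measure"
    and lam :: real and g :: "nat \<times> real \<Rightarrow> real"
  assumes "N \<ge> 1"
    and "\<forall>i\<in>{1..N}. r i > 0 \<and> p i \<in> {0..1} \<and> q i \<in> {0..1} \<and> c i > 0 \<and> d i > 0"
    and "\<forall>i\<in>{1..N}. \<forall>j\<in>{1,2}. sets (P i j) = sets (restrict_space borel (Su N r)) \<and>
           emeasure (P i j) (space (P i j)) \<le> 1"
    and "lam > 0"
    and "continuous_on (Su N r) g"
    and "\<exists>!u. idx_vec N u \<and> lin_sys lam N r p q c d P g u"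
  shows "\<exists>f. A_rel N r p q c d P f (\<lambda>y. lam * f y - g y) \<and>
             (\<forall>h. A_rel N r p q c d P h (\<lambda>y. lam * h y - g y) \<longrightarrow> (\<forall>y\<in>Su N r. h y = f y)) \<and>
             (\<forall>y\<in>Su N r. f y = Rco lam N r p q c d P g y)"
proof -
  have prm: "r i > 0" "p i \<in> {0..1}" "q i \<in> {0..1}" "c i > 0" "d i > 0" if "i \<in> {1..N}" for i
    using assms(2) that by auto
  have PM: "sets (P i j) = sets (restrict_space borel (Su N r))" "emeasure (P i j) (space (P i j)) \<le> 1"
    if "i \<in> {1..N}" "j \<in> {1,2}" for i j
    using assms(3) that by auto
  have gc: "continuous_on {0..r i} (\<lambda>x. g (i, x))" if "i \<in> {1..N}" for i
    using that by (intro continuous_on_compose2[OF assms(5), of _ "\<lambda>x. (i, x)"]) (auto intro!: continuous_intros simp: Su_def)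
  define u where "u = usol lam N r p q c d P g"
  have u: "idx_vec N u \<and> lin_sys lam N r p q c d P g u" unfolding u_def usol_def by (rule theI'[OF assms(6)])
  define Rr where "Rr i = resolvent_i lam (r i) (p i) (q i) (c i) (d i) (\<lambda>y. g (i, y))" for i
  have Rp: "\<exists>R1 R2. C2_on 0 (r i) (Rr i) R1 R2 \<and>
     (\<forall>x\<in>{0..r i}. R2 x = 2 * lam * Rr i x - 2 * g (i, x)) \<and>
     p i * R2 0 - (1 - p i) * R1 0 + c i * Rr i 0 = 0 \<and>
     q i * R2 (r i) + (1 - q i) * R1 (r i) + d i * Rr i (r i) = 0" if "i \<in> {1..N}" for i
    unfolding Rr_def by (rule res_prop[OF assms(4) prm[OF that] gc[OF that]])
  define s where "s = sqrt (2 * lam)"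
  define Wi where "Wi i = Wdet lam (r i) (p i) (q i) (c i) (d i)" for i
  define L1 where "L1 i x = c i / Wi i * (a22 lam (r i) (q i) (d i) * exp (s * x) - a21 lam (r i) (q i) (d i) * exp (- s * x))" for i x
  define L2 where "L2 i x = d i / Wi i * (a11 lam (p i) (c i) * exp (- s * x) - a12 lam (p i) (c i) * exp (s * x))" for i x
  have ell_eq: "ell lam r p q c d k l (i, x) = (if k = i \<and> x \<in> {0..r i} then (if l = 1 then L1 i x else L2 i x) else 0)" for k l i x
    unfolding ell_def L1_def L2_def Wi_def s_def Let_def by auto
  define F where "F v = (\<lambda>y. Rdu lam N r p q c d g y + (\<Sum>k=1..N. \<Sum>l\<in>{1,2}. v k l * ell lam r p q c d k l y))" for v
  have RcoF: "Rco lam N r p q c d P g = F u" unfolding Rco_def F_def u_def ..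
  have Feq: "F v (i, x) = Rr i x + v i 1 * L1 i x + v i 2 * L2 i x" if "i \<in> {1..N}" "x \<in> {0..r i}" for v i x
  proof -
    have "(\<Sum>k=1..N. \<Sum>l\<in>{1,2}. v k l * ell lam r p q c d k l (i, x)) =
        (\<Sum>k=1..N. if k = i then v i 1 * L1 i x + v i 2 * L2 i x else 0)"
      using that by (intro sum.cong) (auto simp: ell_eq)
    also have "\<dots> = v i 1 * L1 i x + v i 2 * L2 i x" using that by simp
    finally show ?thesis unfolding F_def Rdu_def Rr_def using that by simp
  qed
  have piece_i: "\<exists>f1 f2. C2_on 0 (r i) (\<lambda>x. F v (i, x)) f1 f2 \<and>
      (\<forall>x\<in>{0..r i}. f2 x = 2 * lam * F v (i, x) - 2 * g (i, x)) \<and>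
      p i * f2 0 - (1 - p i) * f1 0 + c i * F v (i, 0) = c i * v i 1 \<and>
      q i * f2 (r i) + (1 - q i) * f1 (r i) + d i * F v (i, r i) = d i * v i 2" if i: "i \<in> {1..N}" for v i
  proof -
    obtain R1 R2 where R: "C2_on 0 (r i) (Rr i) R1 R2"
     "\<forall>x\<in>{0..r i}. R2 x = 2 * lam * Rr i x - 2 * g (i, x)"
     "p i * R2 0 - (1 - p i) * R1 0 + c i * Rr i 0 = 0"
     "q i * R2 (r i) + (1 - q i) * R1 (r i) + d i * Rr i (r i) = 0" using Rp[OF i] by blast
    obtain f1 f2 where Q: "C2_on 0 (r i) (\<lambda>x. Rr i x + v i 1 * L1 i x + v i 2 * L2 i x) f1 f2"
      "\<forall>x\<in>{0..r i}. f2 x = 2 * lam * (Rr i x + v i 1 * L1 i x + v i 2 * L2 i x) - 2 * g (i, x)"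
      "p i * f2 0 - (1 - p i) * f1 0 + c i * (Rr i 0 + v i 1 * L1 i 0 + v i 2 * L2 i 0) = c i * v i 1"
      "q i * f2 (r i) + (1 - q i) * f1 (r i) + d i * (Rr i (r i) + v i 1 * L1 i (r i) + v i 2 * L2 i (r i)) = d i * v i 2"
      using piece[OF assms(4) prm[OF i] R, of "v i 1" "v i 2"] unfolding L1_def L2_def Wi_def s_def by blast
    have 0: "0 \<in> {0..r i}" "r i \<in> {0..r i}" using prm[OF i] by auto
    have C: "C2_on 0 (r i) (\<lambda>x. F v (i, x)) f1 f2" using C2_transform[OF Q(1)] Feq[OF i] by simp
    show ?thesis apply (rule exI[where x=f1], rule exI[where x=f2])
      using C Q(2-4) Feq[OF i] 0 by simp
  qed
  have contRdu: "continuous_on (Su N r) (Rdu lam N r p q c d g)"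
  proof (rule cont_Su, intro ballI)
    fix i assume i: "i \<in> {1..N}"
    have "(\<lambda>x. Rdu lam N r p q c d g (i, x)) = Rr i" using i unfolding Rdu_def Rr_def by auto
    moreover obtain R1 R2 where "C2_on 0 (r i) (Rr i) R1 R2" using Rp[OF i] by blast
    ultimately show "continuous_on {0..r i} (\<lambda>x. Rdu lam N r p q c d g (i, x))" using C2_cont by metis
  qed
  have contell: "continuous_on (Su N r) (ell lam r p q c d k l)" for k l
  proof (rule cont_Su, intro ballI)
    fix i assume i: "i \<in> {1..N}"
    have "continuous_on {0..r i} (\<lambda>x. if k = i then (if l = 1 then L1 i x else L2 i x) else 0)"
      using W_neg[OF assms(4) prm[OF i]] unfolding L1_def L2_def Wi_def
      by (cases "k = i"; cases "l = 1") (auto intro!: continuous_intros)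
    thus "continuous_on {0..r i} (\<lambda>x. ell lam r p q c d k l (i, x))"
      by (rule continuous_on_cong[THEN iffD1, rotated 2]) (auto simp: ell_eq)
  qed
  have intR: "integrable (P i j) (Rdu lam N r p q c d g)" if "i \<in> {1..N}" "j \<in> {1,2}" for i j
    using integ_Su[OF PM[OF that] contRdu] .
  have intE: "integrable (P i j) (ell lam r p q c d k l)" if "i \<in> {1..N}" "j \<in> {1,2}" for i j k l
    using integ_Su[OF PM[OF that] contell] .
  have intF: "integral\<^sup>L (P i j) (F v) = integral\<^sup>L (P i j) (Rdu lam N r p q c d g)
      + (\<Sum>k=1..N. \<Sum>l\<in>{1,2}. v k l * integral\<^sup>L (P i j) (ell lam r p q c d k l))"
    if "i \<in> {1..N}" "j \<in> {1,2}" for i j v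
    unfolding F_def using intR[OF that] intE[OF that]
    by (simp add: integral_sum integrable_sum)
  have exist: "A_rel N r p q c d P (F u) (\<lambda>y. lam * F u y - g y)"
    unfolding A_rel_def
  proof (intro ballI)
    fix i assume i: "i \<in> {1..N}"
    obtain f1 f2 where f: "C2_on 0 (r i) (\<lambda>x. F u (i, x)) f1 f2"
      "\<forall>x\<in>{0..r i}. f2 x = 2 * lam * F u (i, x) - 2 * g (i, x)"
      "p i * f2 0 - (1 - p i) * f1 0 + c i * F u (i, 0) = c i * u i 1"
      "q i * f2 (r i) + (1 - q i) * f1 (r i) + d i * F u (i, r i) = d i * u i 2"
      using piece_i[OF i, of u] by blast
    have I: "integral\<^sup>L (P i j) (F u) = u i j" if j: "j \<in> {1,2}" for j
    proof -
      have e: "u i j = integral\<^sup>L (P i j) (Rdu lam N r p q c d g)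
          + (\<Sum>k=1..N. \<Sum>l\<in>{1,2}. u k l * integral\<^sup>L (P i j) (ell lam r p q c d k l))"
        using u i j unfolding lin_sys_def by blast
      show ?thesis by (rule trans[OF intF[OF i j] e[symmetric]])
    qed
    show "\<exists>f1 f2. C2_on 0 (r i) (\<lambda>x. F u (i, x)) f1 f2 \<and>
        p i * f2 0 - (1 - p i) * f1 0 + c i * F u (i, 0) = c i * integral\<^sup>L (P i 1) (F u) \<and>
        q i * f2 (r i) + (1 - q i) * f1 (r i) + d i * F u (i, r i) = d i * integral\<^sup>L (P i 2) (F u) \<and>
        (\<forall>x\<in>{0..r i}. lam * F u (i, x) - g (i, x) = f2 x / 2)"
      apply (rule exI[where x=f1], rule exI[where x=f2])
      using f I[of 1] I[of 2] by auto
  qed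
  have uniq: "\<forall>y\<in>Su N r. h y = F u y" if hA: "A_rel N r p q c d P h (\<lambda>y. lam * h y - g y)" for h
  proof -
    define v where "v k l = (if k \<in> {1..N} \<and> l \<in> {1,2} then integral\<^sup>L (P k l) h else 0)" for k l
    have hF: "h (i, x) = F v (i, x)" if i: "i \<in> {1..N}" and x: "x \<in> {0..r i}" for i x
    proof -
      obtain h1 h2 where H: "C2_on 0 (r i) (\<lambda>x. h (i, x)) h1 h2"
        "p i * h2 0 - (1 - p i) * h1 0 + c i * h (i, 0) = c i * integral\<^sup>L (P i 1) h"
        "q i * h2 (r i) + (1 - q i) * h1 (r i) + d i * h (i, r i) = d i * integral\<^sup>L (P i 2) h"
        "\<forall>x\<in>{0..r i}. lam * h (i, x) - g (i, x) = h2 x / 2"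
        using hA i unfolding A_rel_def by blast
      obtain f1 f2 where f: "C2_on 0 (r i) (\<lambda>x. F v (i, x)) f1 f2"
        "\<forall>x\<in>{0..r i}. f2 x = 2 * lam * F v (i, x) - 2 * g (i, x)"
        "p i * f2 0 - (1 - p i) * f1 0 + c i * F v (i, 0) = c i * v i 1"
        "q i * f2 (r i) + (1 - q i) * f1 (r i) + d i * F v (i, r i) = d i * v i 2"
        using piece_i[OF i, of v] by blast
      have v12: "v i 1 = integral\<^sup>L (P i 1) h" "v i 2 = integral\<^sup>L (P i 2) h" using i by (auto simp: v_def)
      have "\<forall>x\<in>{0..r i}. h (i, x) + (-1) * F v (i, x) = 0"
      proof (rule hom_zero[OF assms(4) prm[OF i] C2_lin[OF H(1) f(1)]])
        show "\<forall>x\<in>{0..r i}. h2 x + - 1 * f2 x = 2 * lam * (h (i, x) + - 1 * F v (i, x))"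
        proof
          fix x assume x: "x \<in> {0..r i}"
          have "lam * h (i, x) - g (i, x) = h2 x / 2" "f2 x = 2 * lam * F v (i, x) - 2 * g (i, x)"
            using H(4) f(2) x by auto
          thus "h2 x + - 1 * f2 x = 2 * lam * (h (i, x) + - 1 * F v (i, x))" by (simp add: algebra_simps)
        qed
        show "p i * (h2 0 + - 1 * f2 0) - (1 - p i) * (h1 0 + - 1 * f1 0) + c i * (h (i, 0) + - 1 * F v (i, 0)) = 0"
          using H(2) f(3) v12 by (simp add: algebra_simps)
        show "q i * (h2 (r i) + - 1 * f2 (r i)) + (1 - q i) * (h1 (r i) + - 1 * f1 (r i)) + d i * (h (i, r i) + - 1 * F v (i, r i)) = 0"
          using H(3) f(4) v12 by (simp add: algebra_simps)
      qed
      thus ?thesis using x by auto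
    qed
    have hSu: "\<forall>y\<in>Su N r. h y = F v y" unfolding Su_def using hF by auto
    have "lin_sys lam N r p q c d P g v" unfolding lin_sys_def
    proof (intro ballI)
      fix i j :: nat assume i: "i \<in> {1..N}" and j: "j \<in> {1,2}"
      have "v i j = integral\<^sup>L (P i j) h" using i j by (simp add: v_def)
      also have "\<dots> = integral\<^sup>L (P i j) (F v)"
        by (rule Bochner_Integration.integral_cong[OF refl]) (use hSu space_P[OF PM(1)[OF i j]] in auto)
      finally show "v i j = integral\<^sup>L (P i j) (Rdu lam N r p q c d g) +
          (\<Sum>k = 1..N. \<Sum>l\<in>{1, 2}. v k l * integral\<^sup>L (P i j) (ell lam r p q c d k l))"
        unfolding intF[OF i j] .
    qed
    moreover have "idx_vec N v" unfolding idx_vec_def v_def by auto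
    ultimately have "u = v" unfolding u_def usol_def by (intro the1_equality[OF assms(6)]) simp
    thus ?thesis using hSu by simp
  qed
  show ?thesis
  proof (rule exI[where x="F u"], intro conjI)
    show "A_rel N r p q c d P (F u) (\<lambda>y. lam * F u y - g y)" by (rule exist)
    show "\<forall>h. A_rel N r p q c d P h (\<lambda>y. lam * h y - g y) \<longrightarrow> (\<forall>y\<in>Su N r. h y = F u y)"
      using uniq by blast
    show "\<forall>y\<in>Su N r. F u y = Rco lam N r p q c d P g y" unfolding RcoF by simp
  qed
qed

end
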